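(* Let $\widetilde\nabla$ be a canonical snm-connection on $\mathbb R^3$ determined by the unit constant vector field $\mathsf C$. Let $\vec w\in\mathbb R^3$ be a unit vector and $\gamma:I\to\mathbb R^3$ a curve parametrized by arc length contained in a plane orthogonal to $\vec w$, with unit normal $\mathbf n=\gamma'\times\vec w$ and curvature $\kappa$ defined by $\gamma''=\kappa\mathbf n$. Let $M$ be the cylindrical surface $\psi(s,t)=\gamma(s)+t\vec w$, $s\in I$, $t\in\mathbb R$. Then the sectional curvature of $M$ with respect to $\widetilde\nabla$ at $\psi(s,t)$ is $$K=\frac12\Big(\langle\vec w,\mathsf C\rangle^2+\langle\gamma'(s),\mathsf C\rangle^2-\kappa(s)\langle\mathbf n(s),\mathsf C\rangle\Big).$$
   Context: Let $\langle\cdot,\cdot\rangle$ be the Euclidean metric on $\mathbb R^3$ and $\widetilde\nabla^0$ its Levi-Civita connection (the ordinary directional derivative). Given a smooth vector field $\mathsf C$ on $\mathbb R^3$, the semi-symmetric non-metric connection (snm-connection) determined by $\mathsf C$ is $\widetilde\nabla_XY=\widetilde\nabla^0_XY+\langle \mathsf C,Y\rangle X$. It is called canonical if $\mathsf C$ is a constant vector field with $|\mathsf C|=1$. Its curvature tensor is $\widetilde R(X,Y)Z=\widetilde\nabla_X\widetilde\nabla_YZ-\widetilde\nabla_Y\widetilde\nabla_XZ-\widetilde\nabla_{[X,Y]}Z$. For a surface $M$ immersed in $\mathbb R^3$, the induced connection is $\nabla_XY=(\widetilde\nabla_XY)^{\top}$ (tangential component) for tangent vector fields $X,Y$, with curvature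 tensor $R$ defined by the same formula as $\widetilde R$, and the sectional curvature of $M$ with respect to $\widetilde\nabla$ at $p$ is $K(p)=\frac12\big(\langle R(e_1,e_2)e_2,e_1\rangle+\langle R(e_2,e_1)e_1,e_2\rangle\big)$ for an orthonormal basis $\{e_1,e_2\}$ of $T_pM$ (independent of the basis). *)

theory Defs
  imports "HOL-Analysis.Analysis" "HOL-Analysis.Cross3"
begin

text \<open>Surfaces are given by parametrizations psi :: real * real => real^3
  with coordinates (s,t); index 0 refers to s, index 1 to t.\<close>

definition pd :: "nat \<Rightarrow> (real \<times> real \<Rightarrow> real^3) \<Rightarrow> real \<times> real \<Rightarrow> real^3" where
  "pd i F u = (if i = 0 then vector_derivative (\<lambda>a. F (a, snd u)) (at (fst u))
               else vector_derivative (\<lambda>b. F (fst u, b)) (at (snd u)))"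

definition surf_normal :: "(real \<times> real \<Rightarrow> real^3) \<Rightarrow> real \<times> real \<Rightarrow> real^3" where
  "surf_normal psi u = (let c = cross3 (pd 0 psi u) (pd 1 psi u) in c /\<^sub>R norm c)"

definition tan_proj :: "(real \<times> real \<Rightarrow> real^3) \<Rightarrow> real \<times> real \<Rightarrow> real^3 \<Rightarrow> real^3" where
  "tan_proj psi u v = v - (v \<bullet> surf_normal psi u) *\<^sub>R surf_normal psi u"

definition tan_space :: "(real \<times> real \<Rightarrow> real^3) \<Rightarrow> real \<times> real \<Rightarrow> (real^3) set" where
  "tan_space psi u = span {pd 0 psi u, pd 1 psi u}"

text \<open>Induced connection of the snm-connection
  tilde-nabla_X Y = D_X Y + <C,Y> X, in direction of the coordinate field psi_i,
  applied to a vector field Y along psi: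
  nabla_{psi_i} Y = (d_i Y + <C,Y> psi_i)^T.\<close>
definition ind_conn :: "real^3 \<Rightarrow> (real \<times> real \<Rightarrow> real^3) \<Rightarrow> nat \<Rightarrow> (real \<times> real \<Rightarrow> real^3)
    \<Rightarrow> real \<times> real \<Rightarrow> real^3" where
  "ind_conn C psi i Y u = tan_proj psi u (pd i Y u + (C \<bullet> Y u) *\<^sub>R pd i psi u)"

text \<open>Curvature on coordinate fields (their bracket vanishes):
  R(psi_i,psi_j) psi_k = nabla_i nabla_j psi_k - nabla_j nabla_i psi_k.\<close>
definition curv_coord :: "real^3 \<Rightarrow> (real \<times> real \<Rightarrow> real^3) \<Rightarrow> nat \<Rightarrow> nat \<Rightarrow> nat
    \<Rightarrow> real \<times> real \<Rightarrow> real^3" where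
  "curv_coord C psi i j k u =
     ind_conn C psi i (ind_conn C psi j (pd k psi)) u - ind_conn C psi j (ind_conn C psi i (pd k psi)) u"

text \<open>Coordinates of a tangent vector v = a psi_s + b psi_t (Gram-matrix formula).\<close>
definition tan_coord :: "(real \<times> real \<Rightarrow> real^3) \<Rightarrow> real \<times> real \<Rightarrow> real^3 \<Rightarrow> nat \<Rightarrow> real" where
  "tan_coord psi u v i =
    (let p = pd 0 psi u; q = pd 1 psi u;
         E = p \<bullet> p; F = p \<bullet> q; G = q \<bullet> q; D = E * G - F * F
     in if i = 0 then (G * (v \<bullet> p) - F * (v \<bullet> q)) / D
        else (E * (v \<bullet> q) - F * (v \<bullet> p)) / D)"

text \<open>Curvature tensor R(X,Y)Z of the induced connection at psi(u), for tangent vectors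
  X,Y,Z at psi(u), by tensoriality from the coordinate expression.\<close>
definition curv :: "real^3 \<Rightarrow> (real \<times> real \<Rightarrow> real^3) \<Rightarrow> real \<times> real
    \<Rightarrow> real^3 \<Rightarrow> real^3 \<Rightarrow> real^3 \<Rightarrow> real^3" where
  "curv C psi u X Y Z =
    (\<Sum>i<2. \<Sum>j<2. \<Sum>k<2. (tan_coord psi u X i * tan_coord psi u Y j * tan_coord psi u Z k)
        *\<^sub>R curv_coord C psi i j k u)"

definition sect_curv :: "real^3 \<Rightarrow> (real \<times> real \<Rightarrow> real^3) \<Rightarrow> real \<times> real
    \<Rightarrow> real^3 \<Rightarrow> real^3 \<Rightarrow> real" where
  "sect_curv C psi u e1 e2 =
    (1/2) * (curv C psi u e1 e2 e2 \<bullet> e1 + curv C psi u e2 e1 e1 \<bullet> e2)"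

end

theory Submission
  imports Defs
begin

lemma inner_vd:
  fixes f :: "real \<Rightarrow> real^3"
  assumes "(f has_vector_derivative f') (at x)"
  shows "((\<lambda>x. c \<bullet> f x) has_real_derivative (c \<bullet> f')) (at x)"
proof -
  have "((\<lambda>x. c \<bullet> f x) has_derivative (\<lambda>h. c \<bullet> (h *\<^sub>R f'))) (at x)"
    using has_derivative_inner_right assms unfolding has_vector_derivative_def by blast
  then show ?thesis
  proof -
    have "(\<lambda>h. c \<bullet> (h *\<^sub>R f')) = (*) (c \<bullet> f')" by (auto simp: mult.commute)
    then show ?thesis using \<open>((\<lambda>x. c \<bullet> f x) has_derivative _) _\<close> by (simp add: has_field_derivative_def)
  qed
qed

lemma vd_open:
  fixes f g :: "real \<Rightarrow> real^3"
  assumes "open I" "a \<in> I" "\<And>x. x \<in> I \<Longrightarrow> f x = g x" "(g has_vector_derivative g') (at a)"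
  shows "vector_derivative f (at a) = g'"
  by (rule vector_derivative_at, rule has_vector_derivative_transform_within_open[OF assms(4,1,2)])
     (simp add: assms(3))

lemma orth:
  fixes gamma g1 :: "real \<Rightarrow> real^3"
  assumes "open I" "\<forall>x\<in>I. (gamma has_vector_derivative g1 x) (at x)"
    "\<exists>c. \<forall>x\<in>I. gamma x \<bullet> w = c" "a \<in> I"
  shows "g1 a \<bullet> w = 0"
proof -
  obtain c where c: "\<forall>x\<in>I. gamma x \<bullet> w = c" using assms by blast
  have d: "((\<lambda>x. w \<bullet> gamma x) has_real_derivative (w \<bullet> g1 a)) (at a)"
    using inner_vd assms by blast
  have "((\<lambda>x. c) has_real_derivative (w \<bullet> g1 a)) (at a)"
    by (rule has_field_derivative_transform_within_open[OF d assms(1,4)]) (metis c inner_commute)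
  then show ?thesis using DERIV_unique DERIV_const by (metis inner_commute)
qed

lemma span2_decomp:
  fixes T w e :: "real^3"
  assumes "e \<in> span {T, w}" "T \<bullet> T = 1" "w \<bullet> w = 1" "T \<bullet> w = 0"
  shows "e = (e \<bullet> T) *\<^sub>R T + (e \<bullet> w) *\<^sub>R w"
proof -
  obtain k where "e - k *\<^sub>R T \<in> span {w}" using assms(1) span_breakdown_eq by blast
  then obtain m where "e - k *\<^sub>R T = m *\<^sub>R w" using span_singleton by auto
  then have e: "e = k *\<^sub>R T + m *\<^sub>R w" by (simp add: algebra_simps)
  have wT: "w \<bullet> T = 0" using assms(4) by (simp add: inner_commute)
  have "e \<bullet> T = k" "e \<bullet> w = m" using assms(2-4) wT
    by (auto simp: e inner_add_left)
  then show ?thesis using e by simp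
qed

theorem theorem3p1:
  fixes C w :: "real^3" and gamma g1 g2 g3 :: "real \<Rightarrow> real^3"
    and kappa :: "real \<Rightarrow> real" and I :: "real set" and s t :: real and e1 e2 :: "real^3"
  assumes "norm C = 1"
    and "norm w = 1"
    and "open I" and "is_interval I"
    and "\<forall>x\<in>I. (gamma has_vector_derivative g1 x) (at x)"
    and "\<forall>x\<in>I. (g1 has_vector_derivative g2 x) (at x)"
    and "\<forall>x\<in>I. (g2 has_vector_derivative g3 x) (at x)"
    and "\<forall>x\<in>I. norm (g1 x) = 1"
    and "\<exists>c. \<forall>x\<in>I. gamma x \<bullet> w = c"
    and "\<forall>x\<in>I. g2 x = kappa x *\<^sub>R cross3 (g1 x) w"
    and "s \<in> I"
    and "e1 \<in> tan_space (\<lambda>(a, b). gamma a + b *\<^sub>R w) (s, t)"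
    and "e2 \<in> tan_space (\<lambda>(a, b). gamma a + b *\<^sub>R w) (s, t)"
    and "norm e1 = 1" and "norm e2 = 1" and "e1 \<bullet> e2 = 0"
  shows "sect_curv C (\<lambda>(a, b). gamma a + b *\<^sub>R w) (s, t) e1 e2
       = (1/2) * ((w \<bullet> C)\<^sup>2 + (g1 s \<bullet> C)\<^sup>2 - kappa s * (cross3 (g1 s) w \<bullet> C))"
proof -
  define psi where "psi = (\<lambda>(a, b). gamma a + b *\<^sub>R w)"
  define n where "n a = cross3 (g1 a) w" for a
  note I = \<open>open I\<close>
  have ww: "w \<bullet> w = 1" using \<open>norm w = 1\<close> by (simp add: dot_square_norm)
  have TT: "a \<in> I \<Longrightarrow> g1 a \<bullet> g1 a = 1" for a using assms(8) by (simp add: dot_square_norm)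
  have Tw: "a \<in> I \<Longrightarrow> g1 a \<bullet> w = 0" for a using orth[OF I assms(5) assms(9)] by blast
  have wT: "a \<in> I \<Longrightarrow> w \<bullet> g1 a = 0" for a using Tw by (simp add: inner_commute)
  have nw: "n a \<bullet> w = 0" "w \<bullet> n a = 0" for a unfolding n_def using dot_cross_self by (auto simp: inner_commute)
  have nT: "n a \<bullet> g1 a = 0" "g1 a \<bullet> n a = 0" for a unfolding n_def using dot_cross_self by (auto simp: inner_commute)
  have nnorm: "a \<in> I \<Longrightarrow> norm (n a) = 1" for a
  proof -
    assume a: "a \<in> I"
    have "(norm (n a))\<^sup>2 = 1" using norm_cross_dot[of "g1 a" w] Tw[OF a] assms(2,8) a
      by (simp add: n_def)
    then show ?thesis using norm_ge_zero[of "n a"] by (simp add: power2_eq_1_iff)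
  qed
  have nn: "a \<in> I \<Longrightarrow> n a \<bullet> n a = 1" for a using nnorm by (simp add: dot_square_norm)
  have pd0: "a \<in> I \<Longrightarrow> pd 0 psi (a, b) = g1 a" for a b
    unfolding pd_def psi_def using assms(5)
    by (auto intro!: vector_derivative_at derivative_eq_intros)
  have pd1: "pd (Suc 0) psi (a, b) = w" for a b
    unfolding pd_def psi_def
    by (auto intro!: vector_derivative_at derivative_eq_intros)
  have sn: "a \<in> I \<Longrightarrow> surf_normal psi (a, b) = n a" for a b
    using nnorm by (simp add: surf_normal_def pd0 pd1 n_def[symmetric] Let_def)
  have proj: "a \<in> I \<Longrightarrow> tan_proj psi (a, b) v = v - (v \<bullet> n a) *\<^sub>R n a" for a b v
    by (simp add: tan_proj_def sn)
  have g2: "a \<in> I \<Longrightarrow> g2 a = kappa a *\<^sub>R n a" for a using assms(10) n_def by simp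
  have A00: "a \<in> I \<Longrightarrow> ind_conn C psi 0 (pd 0 psi) (a, b) = (C \<bullet> g1 a) *\<^sub>R g1 a" for a b
  proof -
    assume a: "a \<in> I"
    have "pd 0 (pd 0 psi) (a, b) = g2 a"
      unfolding pd_def[of 0 "pd 0 psi"] apply simp
      by (rule vd_open[OF I a]) (auto simp: pd0 assms(6) a)
    then show ?thesis using a
      by (simp add: ind_conn_def proj pd0 g2 nn nT algebra_simps inner_add_left inner_commute)
  qed
  have A01: "a \<in> I \<Longrightarrow> ind_conn C psi 0 (pd (Suc 0) psi) (a, b) = (C \<bullet> w) *\<^sub>R g1 a" for a b
  proof -
    assume a: "a \<in> I"
    have "pd 0 (pd (Suc 0) psi) (a, b) = 0"
      unfolding pd_def[of 0 "pd (Suc 0) psi"] by (simp add: pd1)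
    then show ?thesis using a
      by (simp add: ind_conn_def proj pd0 pd1 nn nT nw algebra_simps inner_add_left inner_commute)
  qed
  have A10: "a \<in> I \<Longrightarrow> ind_conn C psi (Suc 0) (pd 0 psi) (a, b) = (C \<bullet> g1 a) *\<^sub>R w" for a b
  proof -
    assume a: "a \<in> I"
    have "pd (Suc 0) (pd 0 psi) (a, b) = 0"
      unfolding pd_def[of "Suc 0" "pd 0 psi"] by (simp add: pd0 a)
    then show ?thesis using a
      by (simp add: ind_conn_def proj pd0 pd1 nn nT nw algebra_simps inner_add_left inner_commute)
  qed
  have A11: "a \<in> I \<Longrightarrow> ind_conn C psi (Suc 0) (pd (Suc 0) psi) (a, b) = (C \<bullet> w) *\<^sub>R w" for a b
  proof -
    assume a: "a \<in> I"
    have "pd (Suc 0) (pd (Suc 0) psi) (a, b) = 0"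
      unfolding pd_def[of "Suc 0" "pd (Suc 0) psi"] by (simp add: pd1)
    then show ?thesis using a
      by (simp add: ind_conn_def proj pd0 pd1 nn nT nw algebra_simps inner_add_left inner_commute)
  qed
  note sI = \<open>s \<in> I\<close>
  have dT: "(g1 has_vector_derivative g2 s) (at s)" using assms(6) sI by blast
  have dcT: "((\<lambda>a. C \<bullet> g1 a) has_real_derivative (C \<bullet> g2 s)) (at s)" by (rule inner_vd[OF dT])
  have D000: "pd 0 (ind_conn C psi 0 (pd 0 psi)) (s, t) = (C \<bullet> g1 s) *\<^sub>R g2 s + (C \<bullet> g2 s) *\<^sub>R g1 s"
    unfolding pd_def[of 0 "ind_conn C psi 0 (pd 0 psi)"] apply simp
    by (rule vd_open[OF I sI, where g="\<lambda>a. (C \<bullet> g1 a) *\<^sub>R g1 a"])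
       (auto simp: A00 intro!: has_vector_derivative_scaleR[OF dcT dT, THEN has_vector_derivative_eq_rhs])
  have D001: "pd 0 (ind_conn C psi 0 (pd (Suc 0) psi)) (s, t) = (C \<bullet> w) *\<^sub>R g2 s"
    unfolding pd_def[of 0 "ind_conn C psi 0 (pd (Suc 0) psi)"] apply simp
    by (rule vd_open[OF I sI, where g="\<lambda>a. (C \<bullet> w) *\<^sub>R g1 a"])
       (auto simp: A01 intro!: has_vector_derivative_scaleR[OF DERIV_const dT, THEN has_vector_derivative_eq_rhs])
  have D010: "pd 0 (ind_conn C psi (Suc 0) (pd 0 psi)) (s, t) = (C \<bullet> g2 s) *\<^sub>R w"
    unfolding pd_def[of 0 "ind_conn C psi (Suc 0) (pd 0 psi)"] apply simp
    by (rule vd_open[OF I sI, where g="\<lambda>a. (C \<bullet> g1 a) *\<^sub>R w"])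
       (auto simp: A10 intro!: has_vector_derivative_scaleR[OF dcT has_vector_derivative_const, THEN has_vector_derivative_eq_rhs])
  have D011: "pd 0 (ind_conn C psi (Suc 0) (pd (Suc 0) psi)) (s, t) = 0"
    unfolding pd_def[of 0 "ind_conn C psi (Suc 0) (pd (Suc 0) psi)"] apply simp
    by (rule vd_open[OF I sI, where g="\<lambda>a. (C \<bullet> w) *\<^sub>R w"]) (auto simp: A11)
  have D1: "pd (Suc 0) (ind_conn C psi j (pd k psi)) (s, t) = 0" if "j < 2" "k < 2" for j k
  proof -
    have jk: "j = 0 \<or> j = 1" "k = 0 \<or> k = 1" using that by auto
    then show ?thesis unfolding pd_def[of "Suc 0"] using sI
      by (auto simp: A00 A01 A10 A11)
  qed
  define T where "T = g1 s"
  define cT where "cT = C \<bullet> T"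
  define cw where "cw = C \<bullet> w"
  define cn where "cn = C \<bullet> n s"
  define k where "k = kappa s"
  have TT': "T \<bullet> T = 1" "T \<bullet> w = 0" "w \<bullet> T = 0" "n s \<bullet> n s = 1" "T \<bullet> n s = 0" "n s \<bullet> T = 0"
    using TT Tw wT nn nT sI unfolding T_def by auto
  have g2s: "g2 s = k *\<^sub>R n s" using g2 sI k_def by simp
  have pd0s: "pd 0 psi (s, t) = T" using pd0 sI T_def by simp
  have A00s: "ind_conn C psi 0 (pd 0 psi) (s, t) = cT *\<^sub>R T" using A00 sI cT_def T_def by simp
  have A01s: "ind_conn C psi 0 (pd (Suc 0) psi) (s, t) = cw *\<^sub>R T" using A01 sI cw_def T_def by simp
  have A10s: "ind_conn C psi (Suc 0) (pd 0 psi) (s, t) = cT *\<^sub>R w" using A10 sI cT_def T_def by simp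
  have A11s: "ind_conn C psi (Suc 0) (pd (Suc 0) psi) (s, t) = cw *\<^sub>R w" using A11 sI cw_def by simp
  have projs: "tan_proj psi (s, t) v = v - (v \<bullet> n s) *\<^sub>R n s" for v using proj sI by simp
  have D1': "pd (Suc 0) (ind_conn C psi 0 (pd 0 psi)) (s, t) = 0"
    "pd (Suc 0) (ind_conn C psi 0 (pd (Suc 0) psi)) (s, t) = 0"
    "pd (Suc 0) (ind_conn C psi (Suc 0) (pd 0 psi)) (s, t) = 0"
    "pd (Suc 0) (ind_conn C psi (Suc 0) (pd (Suc 0) psi)) (s, t) = 0"
    using D1 by auto
  note D0 = D000[folded T_def, unfolded g2s, folded cT_def] D001[unfolded g2s]
     D010[unfolded g2s] D011
  note simps = nw projs D0 D1' A00s A01s A10s A11s pd0s pd1 TT' cT_def[symmetric]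
     cw_def[symmetric] cn_def[symmetric] inner_add_left inner_diff_left inner_commute algebra_simps
  have O000: "ind_conn C psi 0 (ind_conn C psi 0 (pd 0 psi)) (s, t) = (k * cn + cT * cT) *\<^sub>R T"
    unfolding ind_conn_def[of C psi 0 "ind_conn C psi 0 (pd 0 psi)" "(s,t)"] by (simp add: simps)
  have O100: "ind_conn C psi (Suc 0) (ind_conn C psi 0 (pd 0 psi)) (s, t) = (cT * cT) *\<^sub>R w"
    unfolding ind_conn_def[of C psi "Suc 0" "ind_conn C psi 0 (pd 0 psi)" "(s,t)"] by (simp add: simps)
  have O001: "ind_conn C psi 0 (ind_conn C psi 0 (pd (Suc 0) psi)) (s, t) = (cw * cT) *\<^sub>R T"
    unfolding ind_conn_def[of C psi 0 "ind_conn C psi 0 (pd (Suc 0) psi)" "(s,t)"] by (simp add: simps)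
  have O101: "ind_conn C psi (Suc 0) (ind_conn C psi 0 (pd (Suc 0) psi)) (s, t) = (cw * cT) *\<^sub>R w"
    unfolding ind_conn_def[of C psi "Suc 0" "ind_conn C psi 0 (pd (Suc 0) psi)" "(s,t)"] by (simp add: simps)
  have O010: "ind_conn C psi 0 (ind_conn C psi (Suc 0) (pd 0 psi)) (s, t) = (k * cn) *\<^sub>R w + (cT * cw) *\<^sub>R T"
    unfolding ind_conn_def[of C psi 0 "ind_conn C psi (Suc 0) (pd 0 psi)" "(s,t)"] by (simp add: simps)
  have O110: "ind_conn C psi (Suc 0) (ind_conn C psi (Suc 0) (pd 0 psi)) (s, t) = (cT * cw) *\<^sub>R w"
    unfolding ind_conn_def[of C psi "Suc 0" "ind_conn C psi (Suc 0) (pd 0 psi)" "(s,t)"] by (simp add: simps)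
  have O011: "ind_conn C psi 0 (ind_conn C psi (Suc 0) (pd (Suc 0) psi)) (s, t) = (cw * cw) *\<^sub>R T"
    unfolding ind_conn_def[of C psi 0 "ind_conn C psi (Suc 0) (pd (Suc 0) psi)" "(s,t)"] by (simp add: simps)
  have O111: "ind_conn C psi (Suc 0) (ind_conn C psi (Suc 0) (pd (Suc 0) psi)) (s, t) = (cw * cw) *\<^sub>R w"
    unfolding ind_conn_def[of C psi "Suc 0" "ind_conn C psi (Suc 0) (pd (Suc 0) psi)" "(s,t)"] by (simp add: simps)
  have tc: "tan_coord psi (s, t) v 0 = v \<bullet> T" "tan_coord psi (s, t) v (Suc 0) = v \<bullet> w" for v
    by (simp_all add: tan_coord_def pd0s pd1 TT' ww Let_def)
  have Rz: "curv_coord C psi i i kk (s, t) = 0" for i kk by (simp add: curv_coord_def)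
  have R010: "curv_coord C psi 0 (Suc 0) 0 (s, t) = (k * cn) *\<^sub>R w + (cT * cw) *\<^sub>R T - (cT * cT) *\<^sub>R w"
    by (simp add: curv_coord_def O010 O100)
  have R011: "curv_coord C psi 0 (Suc 0) (Suc 0) (s, t) = (cw * cw) *\<^sub>R T - (cw * cT) *\<^sub>R w"
    by (simp add: curv_coord_def O011 O101)
  have R100: "curv_coord C psi (Suc 0) 0 0 (s, t) = - ((k * cn) *\<^sub>R w + (cT * cw) *\<^sub>R T - (cT * cT) *\<^sub>R w)"
    by (simp add: curv_coord_def O010 O100)
  have R101: "curv_coord C psi (Suc 0) 0 (Suc 0) (s, t) = - ((cw * cw) *\<^sub>R T - (cw * cT) *\<^sub>R w)"
    by (simp add: curv_coord_def O011 O101)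
  have tsp: "tan_space psi (s, t) = span {T, w}" by (simp add: tan_space_def pd0s pd1)
  define x1 where "x1 = e1 \<bullet> T"
  define y1 where "y1 = e1 \<bullet> w"
  define x2 where "x2 = e2 \<bullet> T"
  define y2 where "y2 = e2 \<bullet> w"
  have e1: "e1 = x1 *\<^sub>R T + y1 *\<^sub>R w" unfolding x1_def y1_def
    by (rule span2_decomp) (use assms(12) tsp psi_def TT' ww in auto)
  have e2: "e2 = x2 *\<^sub>R T + y2 *\<^sub>R w" unfolding x2_def y2_def
    by (rule span2_decomp) (use assms(13) tsp psi_def TT' ww in auto)
  have dots: "T \<bullet> e1 = x1" "w \<bullet> e1 = y1" "T \<bullet> e2 = x2" "w \<bullet> e2 = y2"
    by (simp_all add: x1_def y1_def x2_def y2_def inner_commute)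
  have c1: "x1 * x1 + y1 * y1 = 1"
  proof -
    have "e1 \<bullet> e1 = 1" using assms(14) by (simp add: dot_square_norm)
    then show ?thesis by (subst (asm) (1 2) e1) (simp add: inner_add_left inner_add_right TT' ww)
  qed
  have c2: "x2 * x2 + y2 * y2 = 1"
  proof -
    have "e2 \<bullet> e2 = 1" using assms(15) by (simp add: dot_square_norm)
    then show ?thesis by (subst (asm) (1 2) e2) (simp add: inner_add_left inner_add_right TT' ww)
  qed
  have c3: "x1 * x2 + y1 * y2 = 0"
  proof -
    have "e1 \<bullet> e2 = 0" using assms(16) by simp
    then have "x2 * x1 + y2 * y1 = 0" by (subst (asm) e1, subst (asm) e2) (simp add: inner_add_left inner_add_right TT' ww)
    then show ?thesis by (simp add: mult.commute)
  qed
  have det: "(x1 * y2 - x2 * y1)^2 = 1"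
  proof -
    have "(x1 * y2 - x2 * y1)^2 = (x1 * x1 + y1 * y1) * (x2 * x2 + y2 * y2) - (x1 * x2 + y1 * y2)^2"
      by algebra
    then show ?thesis using c1 c2 c3 by simp
  qed
  have main: "sect_curv C psi (s, t) e1 e2 = (1/2) * ((x1 * y2 - x2 * y1)^2 * (cw * cw + cT * cT - k * cn))"
    unfolding sect_curv_def curv_def
    apply (simp add: numeral_2_eq_2 lessThan_Suc tc Rz R010 R011 R100 R101 x1_def[symmetric]
        y1_def[symmetric] x2_def[symmetric] y2_def[symmetric] inner_add_left inner_diff_left dots)
    apply algebra
    done
  have "sect_curv C psi (s, t) e1 e2 = (1/2) * ((w \<bullet> C)\<^sup>2 + (g1 s \<bullet> C)\<^sup>2 - kappa s * (cross3 (g1 s) w \<bullet> C))"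
    unfolding main det by (simp add: cw_def cT_def cn_def k_def T_def n_def inner_commute power2_eq_square)
  then show ?thesis by (simp add: psi_def)
qed
end
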